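(* Let $F$, $H$, $X$, $\Omega$, $Q$ and the sequences generated by the IneIREG method be as described in the context, and suppose $H$ is $\mu$-strongly monotone for some $\mu>0$. Suppose $\eta_k\equiv\eta>0$; $\lambda_k\in[\underline\lambda,\overline\lambda]$ for all $k\ge0$ with $0<\underline\lambda\le\overline\lambda<1/L$, $L:=L_F+\eta L_H$; and $\alpha_0\in[0,1]$ and $\alpha_{k+1}\le(1-\beta_k)\alpha_k$ for all $k\ge0$, where $\beta_k:=\big(\frac{1}{1-\lambda_k^2L^2}+\frac{1}{2\lambda_k\eta\mu}\big)^{-1}$. Define $p_{-1}:=1$, $p_k:=\big(\prod_{i=0}^k(1-\beta_i)\big)^{-1}$ for $k\ge0$, for $k\ge1$ $\Lambda_k:=\sum_{j=0}^{k-1}\lambda_j\eta p_j$ and $\overline y_k:=\Lambda_k^{-1}\sum_{j=0}^{k-1}\lambda_j\eta p_jy_j$, and $\beta:=\big(\frac{1}{1-\overline\lambda^2L^2}+\frac{1}{2\underline\lambda\eta\mu}\big)^{-1}\in(0,1)$. Then for all $k\ge1$, $$-B_H\,\mathrm{dist}(\overline y_k,Q)\le\mathrm{Gap}(\overline y_k,H,Q)\le\frac{(1-\beta)^k}{2\underline\lambda\eta}\Big(D_X^2+\sum_{j=0}^{k-1}p_{j-1}\delta_j\Big).$$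
   Context: Work in $\mathbb{R}^n$ with Euclidean inner product $\langle\cdot,\cdot\rangle$ and norm $\|\cdot\|$. The maps $F\colon \mathrm{Dom}\,F\to\mathbb{R}^n$ and $H\colon\mathrm{Dom}\,H\to\mathbb{R}^n$ are monotone and Lipschitz continuous with constants $L_F>0$ and $L_H>0$; $H$ is $\mu$-strongly monotone means $\langle H(x)-H(y),x-y\rangle\ge\mu\|x-y\|^2$ for all $x,y\in\mathrm{Dom}\,H$. $X$ is a nonempty compact convex set and $\Omega$ a nonempty closed convex set with $X\subset\Omega\subset\mathrm{Dom}\,F\cap\mathrm{Dom}\,H$; $P_X,P_\Omega$ denote orthogonal projections. $Q:=\{x\in X:\langle F(x),y-x\rangle\ge0\ \forall y\in X\}$ is assumed nonempty. $D_X:=\sup_{x,y\in X}\|x-y\|$, $B_H:=\sup_{x\in Q}\|H(x)\|$, $\mathrm{dist}(y,Q)$ is the Euclidean distance to $Q$. $\mathrm{Gap}(z,H,Q):=\sup_{x\in Q}\langle H(x),z-x\rangle$. IneIREG method: start with $x_0=x_{-1}\in X$; for $k=0,1,\dots$, with parameters $\alpha_k\ge0$, $\lambda_k>0$, $\eta_k>0$, set $w_k=x_k+\alpha_k(x_k-x_{k-1})$, $w'_k=P_\Omega(w_k)$, $y_k=P_X\big(w_k-\lambda_k(F(w'_k)+\eta_kH(w'_k))\big)$, $x_{k+1}=P_X\big(w_k-\lambda_k(F(y_k)+\eta_kH(y_k))\big)$. Also $\delta_k:=\alpha_k(1+\alpha_k)\|x_k-x_{k-1}\|^2$ for $k\ge0$.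 *)

theory Defs
  imports "HOL-Analysis.Analysis"
begin

definition monotone_op :: "('a::real_inner \<Rightarrow> 'a) \<Rightarrow> 'a set \<Rightarrow> bool" where
  "monotone_op F S \<longleftrightarrow> (\<forall>x\<in>S. \<forall>y\<in>S. inner (F x - F y) (x - y) \<ge> 0)"

definition strongly_monotone_op :: "real \<Rightarrow> ('a::real_inner \<Rightarrow> 'a) \<Rightarrow> 'a set \<Rightarrow> bool" where
  "strongly_monotone_op \<mu> H S \<longleftrightarrow>
     (\<forall>x\<in>S. \<forall>y\<in>S. inner (H x - H y) (x - y) \<ge> \<mu> * (norm (x - y))\<^sup>2)"

definition VI_sol :: "('a::real_inner \<Rightarrow> 'a) \<Rightarrow> 'a set \<Rightarrow> 'a set" where
  "VI_sol F X = {x \<in> X. \<forall>y\<in>X. inner (F x) (y - x) \<ge> 0}"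

definition Gap :: "'a::real_inner \<Rightarrow> ('a \<Rightarrow> 'a) \<Rightarrow> 'a set \<Rightarrow> real" where
  "Gap z H Q = (SUP x\<in>Q. inner (H x) (z - x))"

end

theory Submission
  imports Defs
begin

lemma eg_step:
  fixes w y xn z gy gw :: "'a::real_inner" and lam L :: real
  assumes P1: "inner (w - lam *\<^sub>R gy - xn) (z - xn) \<le> 0"
    and P2: "inner (w - lam *\<^sub>R gw - y) (xn - y) \<le> 0"
    and Lip: "norm (gy - gw) \<le> L * norm (y - w)"
    and lam: "lam > 0" and L: "L \<ge> 0"
  shows "(norm (xn - z))\<^sup>2 \<le> (norm (w - z))\<^sup>2 - (1 - lam\<^sup>2 * L\<^sup>2) * (norm (w - y))\<^sup>2
           + 2 * lam * inner gy (z - y)"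
proof -
  have I1: "(norm (xn - z))\<^sup>2 = (norm (w - z))\<^sup>2 - (norm (w - xn))\<^sup>2 + 2 * inner (xn - w) (xn - z)"
    by (simp add: power2_norm_eq_inner inner_diff_left inner_diff_right inner_commute)
  have I2: "(norm (w - xn))\<^sup>2 = (norm (w - y))\<^sup>2 + (norm (y - xn))\<^sup>2 + 2 * inner (w - y) (y - xn)"
    by (simp add: power2_norm_eq_inner inner_diff_left inner_diff_right inner_commute)
  have Q1: "inner (xn - w) (xn - z) \<le> lam * inner gy (z - xn)"
    using P1 by (simp add: inner_diff_left inner_diff_right inner_commute algebra_simps)
  have Q2: "inner (w - y) (y - xn) \<ge> lam * inner gw (y - xn)"
    using P2 by (simp add: inner_diff_left inner_diff_right inner_commute algebra_simps)
  have Q3: "inner gy (z - xn) = inner gy (z - y) + inner gy (y - xn)"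
    by (simp add: inner_diff_right)
  have Q4: "inner gy (y - xn) - inner gw (y - xn) = inner (gy - gw) (y - xn)"
    by (simp add: inner_diff_left)
  have Q5: "inner (gy - gw) (y - xn) \<le> L * norm (w - y) * norm (y - xn)"
  proof -
    have "inner (gy - gw) (y - xn) \<le> norm (gy - gw) * norm (y - xn)"
      by (rule real_inner_class.Cauchy_Schwarz_ineq2[THEN order_trans[OF abs_ge_self]])
    also have "\<dots> \<le> L * norm (y - w) * norm (y - xn)"
      using Lip by (simp add: mult_right_mono)
    finally show ?thesis by (simp add: norm_minus_commute)
  qed
  have Q6: "2 * lam * (L * norm (w - y) * norm (y - xn)) \<le> lam\<^sup>2 * L\<^sup>2 * (norm (w - y))\<^sup>2 + (norm (y - xn))\<^sup>2"
  proof -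
    have "0 \<le> (lam * L * norm (w - y) - norm (y - xn))\<^sup>2" by simp
    then show ?thesis by (simp add: power2_eq_square algebra_simps)
  qed
  have "2 * lam * inner (gy - gw) (y - xn) \<le> 2 * lam * (L * norm (w - y) * norm (y - xn))"
    using Q5 lam by simp
  then show ?thesis
    using I1 I2 Q1 Q2 Q3 Q4 Q6 lam
    by (simp add: algebra_simps)
qed

lemma sq_comb:
  fixes a b c1 c2 :: real
  assumes "c1 > 0" "c2 > 0"
  shows "inverse (1 / c1 + 1 / c2) * (a + b)\<^sup>2 \<le> c1 * a\<^sup>2 + c2 * b\<^sup>2"
proof -
  have "0 \<le> (c1 * a - c2 * b)\<^sup>2" by simp
  hence "2 * a * b * c1 * c2 \<le> c1\<^sup>2 * a\<^sup>2 + c2\<^sup>2 * b\<^sup>2"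
    by (simp add: power2_eq_square algebra_simps)
  hence "(a + b)\<^sup>2 * (c1 * c2) \<le> (c1 + c2) * (c1 * a\<^sup>2 + c2 * b\<^sup>2)"
    by (simp add: power2_eq_square algebra_simps)
  moreover have "1 / c1 + 1 / c2 = (c1 + c2) / (c1 * c2)" using assms by (simp add: field_simps)
  hence "inverse (1 / c1 + 1 / c2) = (c1 * c2) / (c1 + c2)" by simp
  moreover have "(c1 * c2) / (c1 + c2) * (a + b)\<^sup>2 = ((a + b)\<^sup>2 * (c1 * c2)) / (c1 + c2)" by simp
  moreover have "((a + b)\<^sup>2 * (c1 * c2)) / (c1 + c2) \<le> c1 * a\<^sup>2 + c2 * b\<^sup>2"
    using \<open>(a + b)\<^sup>2 * (c1 * c2) \<le> _\<close> assms by (simp add: pos_divide_le_eq mult.commute)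
  ultimately show ?thesis by (simp add: mult.commute)
qed

lemma inertial_id0:
  fixes u v :: "'a::real_inner" and a :: real
  shows "(norm ((1 + a) *\<^sub>R u - a *\<^sub>R v))\<^sup>2 = (1 + a) * (norm u)\<^sup>2 - a * (norm v)\<^sup>2
          + a * (1 + a) * (norm (u - v))\<^sup>2"
proof -
  have c: "inner v u = inner u v" by (rule inner_commute)
  have 1: "(norm ((1 + a) *\<^sub>R u - a *\<^sub>R v))\<^sup>2 = (1+a) * ((1+a) * inner u u) - (1+a) * (a * inner u v) - (a * ((1+a) * inner u v)) + a * (a * inner v v)"
    unfolding power2_norm_eq_inner inner_diff_left inner_diff_right inner_scaleR_left inner_scaleR_right c
    by (simp add: algebra_simps)
  have 2: "(norm (u - v))\<^sup>2 = inner u u - inner u v - inner u v + inner v v"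
    unfolding power2_norm_eq_inner inner_diff_left inner_diff_right c by simp
  show ?thesis unfolding 1 2 power2_norm_eq_inner by (simp add: algebra_simps)
qed

lemma inertial_id:
  fixes x x' z :: "'a::real_inner" and a :: real
  shows "(norm (x + a *\<^sub>R (x - x') - z))\<^sup>2 = (1 + a) * (norm (x - z))\<^sup>2 - a * (norm (x' - z))\<^sup>2
          + a * (1 + a) * (norm (x - x'))\<^sup>2"
proof -
  have e1: "x + a *\<^sub>R (x - x') - z = (1 + a) *\<^sub>R (x - z) - a *\<^sub>R (x' - z)"
    by (simp add: algebra_simps)
  have e2: "(x - z) - (x' - z) = x - x'" by simp
  show ?thesis unfolding e1 using inertial_id0[of a "x - z" "x' - z"] unfolding e2 .
qed

lemma step_bound:
  fixes F H :: "'a::euclidean_space \<Rightarrow> 'a" and D X \<Omega> :: "'a set"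
  assumes F_mono: "monotone_op F D" and H_strong: "strongly_monotone_op mu H D"
    and F_lip: "LF-lipschitz_on D F" and H_lip: "LH-lipschitz_on D H"
    and Xc: "closed X" and Xv: "convex X" and Xne: "X \<noteq> {}"
    and Oc: "closed \<Omega>" and Ov: "convex \<Omega>" and XO: "X \<subseteq> \<Omega>" and OD: "\<Omega> \<subseteq> D"
    and z: "z \<in> VI_sol F X" and lam: "lam > 0" and eta: "eta > 0" and mu: "mu > 0"
    and lamL: "lam * (LF + eta * LH) < 1"
    and w': "w' = closest_point \<Omega> w"
    and y: "y = closest_point X (w - lam *\<^sub>R (F w' + eta *\<^sub>R H w'))"
    and xn: "xn = closest_point X (w - lam *\<^sub>R (F y + eta *\<^sub>R H y))"
  shows "(norm (xn - z))\<^sup>2 \<le> (1 - inverse (1 / (1 - lam\<^sup>2 * (LF + eta * LH)\<^sup>2) + 1 / (2 * lam * eta * mu)))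
            * (norm (w - z))\<^sup>2 - 2 * lam * eta * inner (H z) (y - z)"
proof -
  define L where "L = LF + eta * LH"
  define gy where "gy = F y + eta *\<^sub>R H y"
  define gw where "gw = F w' + eta *\<^sub>R H w'"
  have LF0: "LF \<ge> 0" using F_lip lipschitz_on_nonneg by blast
  have LH0: "LH \<ge> 0" using H_lip lipschitz_on_nonneg by blast
  have L0: "L \<ge> 0" unfolding L_def using LF0 LH0 eta by simp
  have One: "\<Omega> \<noteq> {}" using Xne XO by blast
  have yX: "y \<in> X" unfolding y using closest_point_in_set[OF Xc Xne] .
  have xnX: "xn \<in> X" unfolding xn using closest_point_in_set[OF Xc Xne] .
  have zX: "z \<in> X" using z unfolding VI_sol_def by blast
  have w'O: "w' \<in> \<Omega>" unfolding w' using closest_point_in_set[OF Oc One] .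
  have yO: "y \<in> \<Omega>" using yX XO by blast
  have yD: "y \<in> D" "w' \<in> D" "z \<in> D" using yO w'O zX XO OD by auto
  have P1: "inner (w - lam *\<^sub>R gy - xn) (z - xn) \<le> 0"
    unfolding xn gy_def using closest_point_dot[OF Xv Xc zX] .
  have P2: "inner (w - lam *\<^sub>R gw - y) (xn - y) \<le> 0"
    using closest_point_dot[OF Xv Xc xnX, of "w - lam *\<^sub>R gw"] unfolding gw_def y by simp
  have dyw: "norm (y - w') \<le> norm (y - w)"
    using closest_point_lipschitz[OF Ov Oc One, of y w] closest_point_self[OF yO]
    by (simp add: w' dist_norm)
  have "norm (gy - gw) = norm ((F y - F w') + eta *\<^sub>R (H y - H w'))"
    unfolding gy_def gw_def by (simp add: algebra_simps)
  also have "\<dots> \<le> norm (F y - F w') + eta * norm (H y - H w')"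
    using norm_triangle_ineq eta by (simp add: order_trans[OF norm_triangle_ineq])
  also have "\<dots> \<le> LF * norm (y - w') + eta * (LH * norm (y - w'))"
    using lipschitz_onD[OF F_lip yD(1,2)] lipschitz_onD[OF H_lip yD(1,2)] eta
    by (simp add: dist_norm add_mono)
  also have "\<dots> = L * norm (y - w')" unfolding L_def by (simp add: algebra_simps)
  also have "\<dots> \<le> L * norm (y - w)" using dyw L0 by (simp add: mult_left_mono)
  finally have Lip: "norm (gy - gw) \<le> L * norm (y - w)" .
  have E: "(norm (xn - z))\<^sup>2 \<le> (norm (w - z))\<^sup>2 - (1 - lam\<^sup>2 * L\<^sup>2) * (norm (w - y))\<^sup>2
           + 2 * lam * inner gy (z - y)"
    by (rule eg_step[OF P1 P2 Lip lam L0])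
  have Fm: "inner (F y) (z - y) \<le> 0"
  proof -
    have "inner (F y - F z) (y - z) \<ge> 0" using F_mono yD unfolding monotone_op_def by blast
    moreover have "inner (F z) (y - z) \<ge> 0" using z yX unfolding VI_sol_def by blast
    ultimately show ?thesis by (simp add: inner_diff_left inner_diff_right inner_commute algebra_simps)
  qed
  have Hm: "inner (H y) (z - y) \<le> - mu * (norm (y - z))\<^sup>2 - inner (H z) (y - z)"
  proof -
    have "inner (H y - H z) (y - z) \<ge> mu * (norm (y - z))\<^sup>2"
      using H_strong yD unfolding strongly_monotone_op_def by blast
    then show ?thesis by (simp add: inner_diff_left inner_diff_right inner_commute algebra_simps)
  qed
  have G: "inner gy (z - y) \<le> eta * (- mu * (norm (y - z))\<^sup>2 - inner (H z) (y - z))"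
  proof -
    have "eta * inner (H y) (z - y) \<le> eta * (- mu * (norm (y - z))\<^sup>2 - inner (H z) (y - z))"
      using mult_left_mono[OF Hm less_imp_le[OF eta]] .
    then show ?thesis unfolding gy_def using Fm by (simp add: inner_add_left)
  qed
  define c1 where "c1 = 1 - lam\<^sup>2 * L\<^sup>2"
  define c2 where "c2 = 2 * lam * eta * mu"
  define bb where "bb = inverse (1 / c1 + 1 / c2)"
  have c1: "c1 > 0"
  proof -
    have "lam * L < 1" using lamL unfolding L_def .
    moreover have "lam * L \<ge> 0" using lam L0 by simp
    ultimately have "(lam * L)\<^sup>2 < 1" by (simp add: power_less_one_iff abs_square_less_1)
    then show ?thesis unfolding c1_def by (simp add: power_mult_distrib)
  qed
  have c2: "c2 > 0" unfolding c2_def using lam eta mu by simp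
  have bb0: "bb \<ge> 0" unfolding bb_def using c1 c2 by simp
  have SC: "bb * (norm (w - y) + norm (y - z))\<^sup>2 \<le> c1 * (norm (w - y))\<^sup>2 + c2 * (norm (y - z))\<^sup>2"
    unfolding bb_def by (rule sq_comb[OF c1 c2])
  have "norm (w - z) \<le> norm (w - y) + norm (y - z)"
    using norm_triangle_ineq[of "w - y" "y - z"] by simp
  hence "(norm (w - z))\<^sup>2 \<le> (norm (w - y) + norm (y - z))\<^sup>2"
    by (simp add: power_mono)
  hence T: "bb * (norm (w - z))\<^sup>2 \<le> bb * (norm (w - y) + norm (y - z))\<^sup>2"
    using bb0 by (simp add: mult_left_mono)
  have "(norm (xn - z))\<^sup>2 \<le> (norm (w - z))\<^sup>2 - c1 * (norm (w - y))\<^sup>2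
           - c2 * (norm (y - z))\<^sup>2 - 2 * lam * eta * inner (H z) (y - z)"
    using E mult_left_mono[OF G, of "2 * lam"] lam unfolding c1_def c2_def
    by (simp add: algebra_simps)
  also have "\<dots> \<le> (1 - bb) * (norm (w - z))\<^sup>2 - 2 * lam * eta * inner (H z) (y - z)"
    using SC T by (simp add: algebra_simps)
  finally show ?thesis unfolding bb_def c1_def c2_def L_def .
qed

lemma beta_range:
  fixes l1 l2 L eta mu :: real
  assumes "0 < l1" "l1 * L < 1" "L \<ge> 0" "0 < l2" "0 < eta" "0 < mu"
  shows "0 < inverse (1 / (1 - l1\<^sup>2 * L\<^sup>2) + 1 / (2 * l2 * eta * mu))"
    and "inverse (1 / (1 - l1\<^sup>2 * L\<^sup>2) + 1 / (2 * l2 * eta * mu)) < 1"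
proof -
  have "(l1 * L)\<^sup>2 < 1" using assms by (simp add: abs_square_less_1)
  hence c: "0 < 1 - l1\<^sup>2 * L\<^sup>2" "1 - l1\<^sup>2 * L\<^sup>2 \<le> 1" by (simp_all add: power_mult_distrib)
  have "1 / (1 - l1\<^sup>2 * L\<^sup>2) \<ge> 1" using c by simp
  moreover have "1 / (2 * l2 * eta * mu) > 0" using assms by simp
  ultimately have "1 / (1 - l1\<^sup>2 * L\<^sup>2) + 1 / (2 * l2 * eta * mu) > 1" by linarith
  then show "0 < inverse (1 / (1 - l1\<^sup>2 * L\<^sup>2) + 1 / (2 * l2 * eta * mu))"
    and "inverse (1 / (1 - l1\<^sup>2 * L\<^sup>2) + 1 / (2 * l2 * eta * mu)) < 1"
    by (simp_all add: inverse_less_1_iff)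
qed

lemma beta_mono:
  fixes l lo hi L eta mu :: real
  assumes "0 < lo" "lo \<le> l" "l \<le> hi" "hi * L < 1" "L \<ge> 0" "0 < eta" "0 < mu"
  shows "inverse (1 / (1 - hi\<^sup>2 * L\<^sup>2) + 1 / (2 * lo * eta * mu))
         \<le> inverse (1 / (1 - l\<^sup>2 * L\<^sup>2) + 1 / (2 * l * eta * mu))"
proof -
  have "(hi * L)\<^sup>2 < 1" using assms by (simp add: abs_square_less_1)
  hence ch: "0 < 1 - hi\<^sup>2 * L\<^sup>2" by (simp add: power_mult_distrib)
  have "l\<^sup>2 \<le> hi\<^sup>2" using assms by (simp add: power_mono)
  hence "l\<^sup>2 * L\<^sup>2 \<le> hi\<^sup>2 * L\<^sup>2" by (simp add: mult_right_mono)
  hence "1 - hi\<^sup>2 * L\<^sup>2 \<le> 1 - l\<^sup>2 * L\<^sup>2" by simp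
  hence 1: "1 / (1 - l\<^sup>2 * L\<^sup>2) \<le> 1 / (1 - hi\<^sup>2 * L\<^sup>2)" using ch by (simp add: frac_le)
  have "2 * lo * eta * mu \<le> 2 * l * eta * mu" using assms by simp
  hence 2: "1 / (2 * l * eta * mu) \<le> 1 / (2 * lo * eta * mu)" using assms by (simp add: frac_le)
  have "l * L \<le> hi * L" using assms by (simp add: mult_right_mono)
  hence p: "0 < 1 / (1 - l\<^sup>2 * L\<^sup>2) + 1 / (2 * l * eta * mu)"
    using beta_range(1)[of l L l eta mu] assms by simp
  show ?thesis using 1 2 p by (intro le_imp_inverse_le) auto
qed

theorem proposition4p10:
  fixes F H :: "'a::euclidean_space \<Rightarrow> 'a"
    and DomF DomH X \<Omega> :: "'a set"
    and LF LH \<mu> \<eta> lam_lo lam_hi :: real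
    and \<alpha> lam \<beta> :: "nat \<Rightarrow> real"
    and x w w' y :: "nat \<Rightarrow> 'a"
  assumes F_mono: "monotone_op F DomF" and F_lip: "LF-lipschitz_on DomF F" and LF_pos: "LF > 0"
    and H_mono: "monotone_op H DomH" and H_lip: "LH-lipschitz_on DomH H" and LH_pos: "LH > 0"
    and H_strong: "strongly_monotone_op \<mu> H DomH" and mu_pos: "\<mu> > 0"
    and X_ne: "X \<noteq> {}" and X_compact: "compact X" and X_convex: "convex X"
    and Om_ne: "\<Omega> \<noteq> {}" and Om_closed: "closed \<Omega>" and Om_convex: "convex \<Omega>"
    and X_sub: "X \<subseteq> \<Omega>" and Om_sub: "\<Omega> \<subseteq> DomF \<inter> DomH"
    and Q_ne: "VI_sol F X \<noteq> {}"
    and eta_pos: "\<eta> > 0"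
    and lam_bounds: "\<And>k. lam_lo \<le> lam k \<and> lam k \<le> lam_hi"
    and lam_lo_pos: "0 < lam_lo" and lam_lo_le: "lam_lo \<le> lam_hi"
    and lam_hi_lt: "lam_hi < 1 / (LF + \<eta> * LH)"
    and alpha_nonneg: "\<And>k. \<alpha> k \<ge> 0"
    and alpha0: "\<alpha> 0 \<le> 1"
    and beta_def: "\<And>k. \<beta> k = inverse (1 / (1 - (lam k)\<^sup>2 * (LF + \<eta> * LH)\<^sup>2)
                                       + 1 / (2 * lam k * \<eta> * \<mu>))"
    and alpha_dec: "\<And>k. \<alpha> (Suc k) \<le> (1 - \<beta> k) * \<alpha> k"
    and x0: "x 0 \<in> X"
    and w_def: "\<And>k. w k = x k + \<alpha> k *\<^sub>R (x k - x (k - 1))"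
    and w'_def: "\<And>k. w' k = closest_point \<Omega> (w k)"
    and y_def: "\<And>k. y k = closest_point X (w k - lam k *\<^sub>R (F (w' k) + \<eta> *\<^sub>R H (w' k)))"
    and x_step: "\<And>k. x (Suc k) = closest_point X (w k - lam k *\<^sub>R (F (y k) + \<eta> *\<^sub>R H (y k)))"
  shows
    "let L = LF + \<eta> * LH;
         Q = VI_sol F X;
         BH = (SUP q\<in>Q. norm (H q));
         DX = diameter X;
         \<delta> = (\<lambda>k. \<alpha> k * (1 + \<alpha> k) * (norm (x k - x (k - 1)))\<^sup>2);
         p = (\<lambda>k. inverse (\<Prod>i\<le>k. (1 - \<beta> i)));
         pm1 = (\<lambda>j. inverse (\<Prod>i<j. (1 - \<beta> i)));
         Lam = (\<lambda>k. \<Sum>j<k. lam j * \<eta> * p j);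
         ybar = (\<lambda>k. inverse (Lam k) *\<^sub>R (\<Sum>j<k. (lam j * \<eta> * p j) *\<^sub>R y j));
         b = inverse (1 / (1 - lam_hi\<^sup>2 * L\<^sup>2) + 1 / (2 * lam_lo * \<eta> * \<mu>))
     in 0 < b \<and> b < 1 \<and>
        (\<forall>k\<ge>1. - BH * infdist (ybar k) Q \<le> Gap (ybar k) H Q \<and>
                 Gap (ybar k) H Q \<le> (1 - b) ^ k / (2 * lam_lo * \<eta>)
                                     * (DX\<^sup>2 + (\<Sum>j<k. pm1 j * \<delta> j)))"
proof -
  define L where "L = LF + \<eta> * LH"
  define Q where "Q = VI_sol F X"
  define BH where "BH = (SUP q\<in>Q. norm (H q))"
  define DX where "DX = diameter X"
  define \<delta> where "\<delta> = (\<lambda>k. \<alpha> k * (1 + \<alpha> k) * (norm (x k - x (k - 1)))\<^sup>2)"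
  define p where "p = (\<lambda>k. inverse (\<Prod>i\<le>k. (1 - \<beta> i)))"
  define pm1 where "pm1 = (\<lambda>j. inverse (\<Prod>i<j. (1 - \<beta> i)))"
  define Lam where "Lam = (\<lambda>k. \<Sum>j<k. lam j * \<eta> * p j)"
  define ybar where "ybar = (\<lambda>k. inverse (Lam k) *\<^sub>R (\<Sum>j<k. (lam j * \<eta> * p j) *\<^sub>R y j))"
  define b where "b = inverse (1 / (1 - lam_hi\<^sup>2 * L\<^sup>2) + 1 / (2 * lam_lo * \<eta> * \<mu>))"
  define P where "P = (\<lambda>k. \<Prod>i<k. (1 - \<beta> i))"
  define D where "D = DomF \<inter> DomH"
  have Xc: "closed X" using X_compact compact_imp_closed by blast
  have Xb: "bounded X" using X_compact compact_imp_bounded by blast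
  have LF0: "LF \<ge> 0" using F_lip lipschitz_on_nonneg by blast
  have LH0: "LH \<ge> 0" using H_lip lipschitz_on_nonneg by blast
  have Lpos: "L > 0" unfolding L_def using LF_pos LH0 eta_pos by (simp add: add_pos_nonneg)
  have hiL: "lam_hi * L < 1" using lam_hi_lt Lpos unfolding L_def[symmetric] by (simp add: pos_less_divide_eq)
  have lamk: "0 < lam k" "lam k * L < 1" for k
  proof -
    show "0 < lam k" using lam_bounds[of k] lam_lo_pos by linarith
    have "lam k * L \<le> lam_hi * L" using lam_bounds[of k] Lpos by (simp add: mult_right_mono)
    then show "lam k * L < 1" using hiL by linarith
  qed
  have bet: "0 < \<beta> k" "\<beta> k < 1" for k
    using beta_range[of "lam k" L "lam k" \<eta> \<mu>] lamk[of k] Lpos eta_pos mu_pos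
    unfolding beta_def[of k] L_def[symmetric] by auto
  have b01: "0 < b" "b < 1"
    using beta_range[of lam_hi L lam_lo \<eta> \<mu>] hiL lam_lo_pos lam_lo_le Lpos eta_pos mu_pos
    unfolding b_def by auto
  have bleb: "b \<le> \<beta> k" for k
    using beta_mono[of lam_lo "lam k" lam_hi L \<eta> \<mu>] lam_bounds[of k] lam_lo_pos hiL Lpos eta_pos mu_pos
    unfolding beta_def[of k] L_def[symmetric] b_def by auto
  have Ppos: "P k > 0" for k unfolding P_def using bet by (simp add: prod_pos)
  have PSuc: "P (Suc k) = P k * (1 - \<beta> k)" for k unfolding P_def by simp
  have Ple: "P k \<le> (1 - b) ^ k" for k
  proof (induction k)
    case 0 then show ?case by (simp add: P_def)
  next
    case (Suc k)
    have "P k * (1 - \<beta> k) \<le> (1 - b) ^ k * (1 - b)"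
      using Suc Ppos[of k] bet[of k] bleb[of k] by (intro mult_mono) auto
    then show ?case by (simp add: PSuc mult.commute)
  qed
  have pm1P: "pm1 k = inverse (P k)" for k unfolding pm1_def P_def by simp
  have pP: "p k = inverse (P (Suc k))" for k unfolding p_def P_def by (simp add: lessThan_Suc_atMost)
  have pm1_pos: "pm1 k > 0" for k using Ppos pm1P by simp
  have p_pos: "p k > 0" for k using Ppos pP by simp
  have p_rel: "p k * (1 - \<beta> k) = pm1 k" for k
    using Ppos[of k] bet[of k] unfolding pP pm1P PSuc by (simp add: field_simps)
  have pm1Suc: "pm1 (Suc k) = p k" for k unfolding pm1P pP ..
  have xX: "x k \<in> X" for k
  proof (cases k)
    case 0 then show ?thesis using x0 by simp
  next
    case (Suc j) then show ?thesis using x_step[of j] closest_point_in_set[OF Xc X_ne] by simp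
  qed
  have DX0: "DX \<ge> 0" unfolding DX_def using X_ne Xb diameter_bounded_bound[OF Xb] by (meson all_not_in_conv order_trans zero_le_dist)
  have F_monoD: "monotone_op F D" using F_mono unfolding monotone_op_def D_def by blast
  have H_strongD: "strongly_monotone_op \<mu> H D" using H_strong unfolding strongly_monotone_op_def D_def by blast
  have F_lipD: "LF-lipschitz_on D F" using lipschitz_on_subset[OF F_lip] unfolding D_def by blast
  have H_lipD: "LH-lipschitz_on D H" using lipschitz_on_subset[OF H_lip] unfolding D_def by blast
  have OD: "\<Omega> \<subseteq> D" using Om_sub unfolding D_def .
  have dsum_nonneg: "0 \<le> (\<Sum>j<K. pm1 j * \<delta> j)" for K
    using pm1_pos alpha_nonneg unfolding \<delta>_def by (intro sum_nonneg) (simp add: less_imp_le)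
  have key: "(\<Sum>k<K. (lam k * \<eta> * p k) * inner (H z) (y k - z)) \<le> (DX\<^sup>2 + (\<Sum>j<K. pm1 j * \<delta> j)) / 2"
    if zQ: "z \<in> Q" for z K
  proof -
    define \<phi> where "\<phi> = (\<lambda>k. (norm (x k - z))\<^sup>2)"
    define c where "c = (\<lambda>k. inner (H z) (y k - z))"
    define A where "A = (\<lambda>k. pm1 k * \<alpha> k)"
    define e where "e = (\<lambda>k. pm1 k * \<delta> k - 2 * \<eta> * lam k * p k * c k)"
    have zX: "z \<in> X" using zQ unfolding Q_def VI_sol_def by blast
    have phiD: "\<phi> k \<le> DX\<^sup>2" for k
    proof -
      have "norm (x k - z) \<le> DX" using diameter_bounded_bound[OF Xb xX[of k] zX] unfolding DX_def by (simp add: dist_norm)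
      then show ?thesis unfolding \<phi>_def by (simp add: power_mono)
    qed
    have phi0: "\<phi> k \<ge> 0" for k unfolding \<phi>_def by simp
    have step: "\<phi> (Suc k) \<le> (1 - \<beta> k) * ((1 + \<alpha> k) * \<phi> k - \<alpha> k * \<phi> (k - 1) + \<delta> k) - 2 * lam k * \<eta> * c k" for k
    proof -
      have "lam k * (LF + \<eta> * LH) < 1" using lamk(2)[of k] unfolding L_def .
      from step_bound[OF F_monoD H_strongD F_lipD H_lipD Xc X_convex X_ne Om_closed Om_convex X_sub OD
          zQ[unfolded Q_def] lamk(1)[of k] eta_pos mu_pos this w'_def[of k] y_def[of k] x_step[of k]]
      have "(norm (x (Suc k) - z))\<^sup>2 \<le> (1 - \<beta> k) * (norm (w k - z))\<^sup>2 - 2 * lam k * \<eta> * inner (H z) (y k - z)"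
        unfolding beta_def[of k] .
      moreover have "(norm (w k - z))\<^sup>2 = (1 + \<alpha> k) * \<phi> k - \<alpha> k * \<phi> (k - 1) + \<delta> k"
        unfolding w_def[of k] inertial_id \<phi>_def \<delta>_def by simp
      ultimately show ?thesis unfolding \<phi>_def c_def by simp
    qed
    have inv: "pm1 K * \<phi> K - A K * \<phi> (K - 1) + A K * DX\<^sup>2 \<le> DX\<^sup>2 + (\<Sum>k<K. e k)" for K
    proof (induction K)
      case 0
      have "(1 - \<alpha> 0) * \<phi> 0 \<le> (1 - \<alpha> 0) * DX\<^sup>2" using alpha0 phiD[of 0] by (intro mult_left_mono) auto
      moreover have "pm1 0 = 1" unfolding pm1_def by simp
      ultimately show ?case unfolding A_def by (simp add: algebra_simps)
    next
      case (Suc K)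
      have s1: "p K * \<phi> (Suc K) \<le> p K * ((1 - \<beta> K) * ((1 + \<alpha> K) * \<phi> K - \<alpha> K * \<phi> (K - 1) + \<delta> K) - 2 * lam K * \<eta> * c K)"
        using step[of K] p_pos[of K] by (intro mult_left_mono) auto
      have s2: "p K * \<phi> (Suc K) \<le> pm1 K * \<phi> K + A K * \<phi> K - A K * \<phi> (K - 1) + e K"
      proof -
        have "p K * ((1 - \<beta> K) * ((1 + \<alpha> K) * \<phi> K - \<alpha> K * \<phi> (K - 1) + \<delta> K) - 2 * lam K * \<eta> * c K)
            = (p K * (1 - \<beta> K)) * ((1 + \<alpha> K) * \<phi> K - \<alpha> K * \<phi> (K - 1) + \<delta> K) - 2 * \<eta> * lam K * p K * c K"
          by (simp add: algebra_simps)
        also have "\<dots> = pm1 K * \<phi> K + A K * \<phi> K - A K * \<phi> (K - 1) + e K"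
          unfolding p_rel A_def e_def by (simp add: algebra_simps)
        finally show ?thesis using s1 by simp
      qed
      have Adec: "A (Suc K) \<le> A K"
      proof -
        have "p K * \<alpha> (Suc K) \<le> p K * ((1 - \<beta> K) * \<alpha> K)"
          using alpha_dec[of K] p_pos[of K] by (intro mult_left_mono) auto
        then show ?thesis unfolding A_def pm1Suc using p_rel[of K] by (simp add: mult.assoc[symmetric])
      qed
      have prod: "0 \<le> (A K - A (Suc K)) * (DX\<^sup>2 - \<phi> K)" using Adec phiD[of K] by simp
      hence prod': "0 \<le> A K * DX\<^sup>2 - A K * \<phi> K - A (Suc K) * DX\<^sup>2 + A (Suc K) * \<phi> K"
        by (simp add: algebra_simps)
      show ?case using Suc.IH s2 prod' unfolding pm1Suc by simp
    qed
    have A0: "A K * (DX\<^sup>2 - \<phi> (K - 1)) \<ge> 0" unfolding A_def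
      using pm1_pos[of K] alpha_nonneg[of K] phiD[of "K - 1"] by simp
    have "pm1 K * \<phi> K \<ge> 0" using pm1_pos[of K] phi0[of K] by simp
    hence "0 \<le> DX\<^sup>2 + (\<Sum>k<K. e k)" using inv[of K] A0 by (simp add: algebra_simps)
    moreover have "(\<Sum>k<K. e k) = (\<Sum>j<K. pm1 j * \<delta> j) - 2 * (\<Sum>k<K. (lam k * \<eta> * p k) * c k)"
      unfolding e_def by (simp add: sum_subtractf sum_distrib_left algebra_simps)
    ultimately show ?thesis unfolding c_def by simp
  qed
  have main: "0 < b \<and> b < 1 \<and>
        (\<forall>k\<ge>1. - BH * infdist (ybar k) Q \<le> Gap (ybar k) H Q \<and>
                 Gap (ybar k) H Q \<le> (1 - b) ^ k / (2 * lam_lo * \<eta>)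
                                     * (DX\<^sup>2 + (\<Sum>j<k. pm1 j * \<delta> j)))"
  proof -
    have Qne: "Q \<noteq> {}" using Q_ne unfolding Q_def .
    have QX: "Q \<subseteq> X" unfolding Q_def VI_sol_def by blast
    have FcX: "continuous_on X F"
      using lipschitz_on_continuous_on[OF F_lip] X_sub Om_sub continuous_on_subset by blast
    have HcQ: "continuous_on Q H"
      using lipschitz_on_continuous_on[OF H_lip] QX X_sub Om_sub continuous_on_subset by blast
    have Qeq: "Q = (\<Inter>v\<in>X. {u \<in> X. (\<lambda>_. 0) u \<le> (\<lambda>u. inner (F u) (v - u)) u})"
      using X_ne unfolding Q_def VI_sol_def by auto
    have "closed Q" unfolding Qeq
      by (intro closed_INT ballI continuous_on_closed_Collect_le Xc continuous_intros FcX)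
    hence Qcomp: "compact Q" using QX Xb by (meson bounded_subset compact_eq_bounded_closed)
    have "compact (H ` Q)" using compact_continuous_image[OF HcQ Qcomp] .
    then obtain B where B: "\<And>q. q \<in> Q \<Longrightarrow> norm (H q) \<le> B"
      using compact_imp_bounded bounded_iff by (metis imageI)
    obtain C where C: "\<And>q. q \<in> Q \<Longrightarrow> norm q \<le> C"
      using compact_imp_bounded[OF Qcomp] bounded_iff by metis
    have bddH: "bdd_above ((\<lambda>q. norm (H q)) ` Q)" using B by (intro bdd_aboveI2) auto
    have BHq: "norm (H q) \<le> BH" if "q \<in> Q" for q
      unfolding BH_def using cSUP_upper[OF that bddH] .
    have bddG: "bdd_above ((\<lambda>q. inner (H q) (v - q)) ` Q)" for v
    proof (rule bdd_aboveI2)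
      fix q assume q: "q \<in> Q"
      have "inner (H q) (v - q) \<le> norm (H q) * norm (v - q)" by (rule real_inner_class.Cauchy_Schwarz_ineq2[THEN order_trans[OF abs_ge_self]])
      also have "\<dots> \<le> B * (norm v + C)"
      proof (rule mult_mono)
        show "norm (H q) \<le> B" using B q .
        show "norm (v - q) \<le> norm v + C" using C[OF q] norm_triangle_ineq4[of v q] by linarith
        show "0 \<le> B" using B[OF q] norm_ge_zero order_trans by blast
      qed simp
      finally show "inner (H q) (v - q) \<le> B * (norm v + C)" .
    qed
    have Qclosed: "closed Q" by fact
    show ?thesis
    proof (intro conjI b01 allI impI)
      fix k :: nat assume k1: "1 \<le> k"
      obtain q where q: "q \<in> Q" "infdist (ybar k) Q = dist (ybar k) q"
        using infdist_attains_inf[OF Qclosed Qne] by blast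
      have "- BH * infdist (ybar k) Q \<le> - norm (H q) * norm (ybar k - q)"
        using BHq[OF q(1)] q(2) infdist_nonneg[of "ybar k" Q] by (simp add: dist_norm mult_right_mono)
      also have "\<dots> \<le> inner (H q) (ybar k - q)"
        using real_inner_class.Cauchy_Schwarz_ineq2[of "H q" "ybar k - q"] by linarith
      also have "\<dots> \<le> Gap (ybar k) H Q" unfolding Gap_def using cSUP_upper[OF q(1) bddG] .
      finally show "- BH * infdist (ybar k) Q \<le> Gap (ybar k) H Q" .
      define S where "S = DX\<^sup>2 + (\<Sum>j<k. pm1 j * \<delta> j)"
      have S0: "S \<ge> 0" unfolding S_def using dsum_nonneg[of k] by simp
      have wpos: "lam j * \<eta> * p j > 0" for j using lamk(1)[of j] eta_pos p_pos[of j] by simp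
      have Lam_ge: "lam (k - 1) * \<eta> * p (k - 1) \<le> Lam k"
        unfolding Lam_def using k1 wpos by (intro member_le_sum) (auto simp: less_imp_le)
      have pk: "p (k - 1) = pm1 k" using k1 pm1Suc[of "k - 1"] by simp
      have "lam_lo * \<eta> * inverse ((1 - b) ^ k) \<le> lam (k - 1) * \<eta> * p (k - 1)"
      proof -
        have "inverse ((1 - b) ^ k) \<le> inverse (P k)"
          using Ple[of k] Ppos[of k] by (intro le_imp_inverse_le) auto
        hence "inverse ((1 - b) ^ k) \<le> p (k - 1)" unfolding pk pm1P .
        moreover have "lam_lo \<le> lam (k - 1)" using lam_bounds by blast
        ultimately show ?thesis using eta_pos lam_lo_pos b01
          by (intro mult_mono) (auto simp: less_imp_le)
      qed
      with Lam_ge have LamL: "lam_lo * \<eta> * inverse ((1 - b) ^ k) \<le> Lam k" by linarith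
      have lpos: "0 < lam_lo * \<eta> * inverse ((1 - b) ^ k)" using lam_lo_pos eta_pos b01 by simp
      have invLam: "inverse (Lam k) \<le> (1 - b) ^ k / (lam_lo * \<eta>)"
      proof -
        have "inverse (Lam k) \<le> inverse (lam_lo * \<eta> * inverse ((1 - b) ^ k))"
          using LamL lpos by (intro le_imp_inverse_le) auto
        also have "\<dots> = (1 - b) ^ k / (lam_lo * \<eta>)" by (simp add: field_simps)
        finally show ?thesis .
      qed
      have Lampos: "Lam k > 0" using LamL lpos by linarith
      show "Gap (ybar k) H Q \<le> (1 - b) ^ k / (2 * lam_lo * \<eta>) * (DX\<^sup>2 + (\<Sum>j<k. pm1 j * \<delta> j))"
        unfolding Gap_def S_def[symmetric]
      proof (rule cSUP_least[OF Qne])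
        fix z assume zQ: "z \<in> Q"
        have e1: "inner (H z) (ybar k) = inverse (Lam k) * (\<Sum>j<k. (lam j * \<eta> * p j) * inner (H z) (y j))"
          unfolding ybar_def by (simp add: inner_sum_right)
        have e2: "(\<Sum>j<k. (lam j * \<eta> * p j) * inner (H z) (y j - z))
            = (\<Sum>j<k. (lam j * \<eta> * p j) * inner (H z) (y j)) - Lam k * inner (H z) z"
          unfolding Lam_def by (simp add: inner_diff_right right_diff_distrib sum_subtractf sum_distrib_right)
        have "inner (H z) (ybar k - z) = inverse (Lam k) * ((\<Sum>j<k. (lam j * \<eta> * p j) * inner (H z) (y j)) - Lam k * inner (H z) z)"
          using Lampos unfolding inner_diff_right e1 by (simp add: right_diff_distrib)
        also have "\<dots> = inverse (Lam k) * (\<Sum>j<k. (lam j * \<eta> * p j) * inner (H z) (y j - z))"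
          by (simp only: e2)
        also have "\<dots> \<le> inverse (Lam k) * (S / 2)"
          using key[OF zQ, of k] Lampos unfolding S_def by (intro mult_left_mono) auto
        also have "\<dots> \<le> (1 - b) ^ k / (lam_lo * \<eta>) * (S / 2)"
          using invLam S0 by (intro mult_right_mono) auto
        also have "\<dots> = (1 - b) ^ k / (2 * lam_lo * \<eta>) * S" by simp
        finally show "inner (H z) (ybar k - z) \<le> (1 - b) ^ k / (2 * lam_lo * \<eta>) * S" .
      qed
    qed
  qed
  show ?thesis unfolding Let_def
    using main unfolding L_def Q_def BH_def DX_def \<delta>_def p_def pm1_def Lam_def ybar_def b_def .
qed

end
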